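(* Let $0<|p|<1$, fix $\eta\in\mathbb C$ with $q=e^{2\pi\mathrm i\eta}$ and write $q^s=e^{2\pi\mathrm i\eta s}$ for $s\in\mathbb C$. Fix $u\in\mathbb C^\ast$ and a square root $\sqrt u$, and set $\sqrt{uq}=q^{1/2}\sqrt u$. For heights $a,c\in\mathbb C$ with $c-a\in\{\pm1\}$ let $\phi(a,c|u)$ be the function of $x\in\mathbb C^\ast$ $$\phi(a,c|u)(x)=\frac{\theta(q^{a(c-a)/2}\sqrt u\,x;p)\,\theta(q^{a(c-a)/2}\sqrt u/x;p)}{q^{a(c-a)/2}\sqrt u},$$ and define $\phi(a,c|uq)$ in the same way with $\sqrt u$ replaced by $\sqrt{uq}$. Then for all heights $a,b,d$ with $b-a\in\{\pm1\}$ and $d-b\in\{\pm1\}$, and generic $a,u$, $$\phi(b,d|u)=\sum_{c}W\bigg(\begin{matrix}a&b\\c&d\end{matrix}\,\bigg|\,u\bigg)\,\phi(a,c|uq),$$ where the sum is over $c$ with $c-a\in\{\pm1\}$ and $d-c\in\{\pm1\}$, and $W\Big(\begin{smallmatrix}a&b\\c&d\end{smallmatrix}\Big|u\Big)=R^{c-a,\,d-c}_{d-b,\,b-a}(a|u)$.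
   Context: $\theta(x;p)=\prod_{k=0}^\infty(1-xp^k)(1-p^{k+1}/x)$ for $x\neq0$. The elliptic SOS weights $R^{mn}_{kl}(\lambda|u)$, for $k,l,m,n\in\{\pm1\}$ with $k+l=m+n$ ($+$ meaning $+1$, $-$ meaning $-1$), are: $R^{++}_{++}=R^{--}_{--}=1$; $R^{+-}_{+-}(\lambda|u)=\frac{\theta(q^{1-\lambda};p)\theta(u;p)}{\theta(q^{-\lambda};p)\theta(uq;p)}$; $R^{-+}_{-+}(\lambda|u)=\frac{\theta(q^{\lambda+1};p)\theta(u;p)}{\theta(q^{\lambda};p)\theta(uq;p)}$; $R^{+-}_{-+}(\lambda|u)=\frac{\theta(q;p)\theta(q^{-\lambda}u;p)}{\theta(q^{-\lambda};p)\theta(uq;p)}$; $R^{-+}_{+-}(\lambda|u)=\frac{\theta(q;p)\theta(q^{\lambda}u;p)}{\theta(q^{\lambda};p)\theta(uq;p)}$. *)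

theory Defs
  imports "HOL-Analysis.Analysis"
begin

definition theta :: "complex \<Rightarrow> complex \<Rightarrow> complex" where
  "theta x p = (\<Prod>k. (1 - x * p ^ k) * (1 - p ^ (k + 1) / x))"

definition qpow :: "complex \<Rightarrow> complex \<Rightarrow> complex" where
  "qpow \<eta> s = exp (2 * pi * \<i> * \<eta> * s)"

text \<open>Elliptic SOS weights R^{mn}_{kl}(lambda|u), signs m n k l in {1,-1}
  (given as complex numbers); weights with m+n \<noteq> k+l are 0.\<close>
definition R_SOS :: "complex \<Rightarrow> complex \<Rightarrow> complex \<Rightarrow> complex \<Rightarrow> complex \<Rightarrow> complex
   \<Rightarrow> complex \<Rightarrow> complex \<Rightarrow> complex" where
  "R_SOS \<eta> p m n k l lam u =
    (let q = qpow \<eta> 1 in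
     if m = 1 \<and> n = 1 \<and> k = 1 \<and> l = 1 then 1
     else if m = -1 \<and> n = -1 \<and> k = -1 \<and> l = -1 then 1
     else if m = 1 \<and> n = -1 \<and> k = 1 \<and> l = -1 then
       theta (qpow \<eta> (1 - lam)) p * theta u p / (theta (qpow \<eta> (-lam)) p * theta (u * q) p)
     else if m = -1 \<and> n = 1 \<and> k = -1 \<and> l = 1 then
       theta (qpow \<eta> (lam + 1)) p * theta u p / (theta (qpow \<eta> lam) p * theta (u * q) p)
     else if m = 1 \<and> n = -1 \<and> k = -1 \<and> l = 1 then
       theta q p * theta (qpow \<eta> (-lam) * u) p / (theta (qpow \<eta> (-lam)) p * theta (u * q) p)
     else if m = -1 \<and> n = 1 \<and> k = 1 \<and> l = -1 then
       theta q p * theta (qpow \<eta> lam * u) p / (theta (qpow \<eta> lam) p * theta (u * q) p)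
     else 0)"

definition W_SOS :: "complex \<Rightarrow> complex \<Rightarrow> complex \<Rightarrow> complex \<Rightarrow> complex \<Rightarrow> complex
   \<Rightarrow> complex \<Rightarrow> complex" where
  "W_SOS \<eta> p a b c d u = R_SOS \<eta> p (c - a) (d - c) (d - b) (b - a) a u"

text \<open>phi(a,c|u)(x), where s is the chosen square root of u.\<close>
definition phi :: "complex \<Rightarrow> complex \<Rightarrow> complex \<Rightarrow> complex \<Rightarrow> complex \<Rightarrow> complex \<Rightarrow> complex" where
  "phi \<eta> p s a c x =
    (let t = qpow \<eta> (a * (c - a) / 2) * s in theta (t * x) p * theta (t / x) p / t)"

end

theory Submission
  imports Defs "HOL-Complex_Analysis.Complex_Analysis"
begin

definition Bp :: "complex \<Rightarrow> complex \<Rightarrow> complex" where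
  "Bp p y = (\<Prod>k. 1 - y * p ^ k)"

locale thp =
  fixes p :: complex
  assumes p0: "0 < norm p" and p1: "norm p < 1"
begin

lemma p_ne0: "p \<noteq> 0" using p0 by auto

lemma summable_pk: "summable (\<lambda>k. norm p ^ k)"
  using p1 by (simp add: summable_geometric)

lemma B_conv: "convergent_prod (\<lambda>k. 1 - y * p ^ k)"
proof -
  have "summable (\<lambda>k. norm ((1 - y * p ^ k) - 1))"
    using summable_mult[OF summable_pk, of "norm y"] by (simp add: norm_mult norm_power)
  then show ?thesis
    by (intro abs_convergent_prod_imp_convergent_prod summable_imp_abs_convergent_prod)
qed

lemma B_has_prod: "(\<lambda>k. 1 - y * p ^ k) has_prod Bp p y"
  unfolding Bp_def using B_conv by blast

lemma B_zero_iff: "Bp p y = 0 \<longleftrightarrow> (\<exists>k. y * p ^ k = 1)"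
proof -
  have e: "(0 = 1 - a) = (a = 1)" for a :: complex by auto
  show ?thesis using has_prod_eq_0_iff[OF B_has_prod[of y]] by (simp add: image_iff e)
qed

lemma theta_eq: "x \<noteq> 0 \<Longrightarrow> theta x p = Bp p x * Bp p (p / x)"
  unfolding theta_def Bp_def
  by (subst prodinf_mult[OF B_conv B_conv]) (simp add: power_Suc mult.commute)

lemma B_shift: "Bp p y = (1 - y) * Bp p (p * y)"
proof (cases "y = 1")
  case True
  then have "Bp p y = 0" unfolding B_zero_iff by (intro exI[of _ 0]) simp
  then show ?thesis using True by simp
next
  case False
  have "(\<Prod>n. 1 - y * p ^ Suc n) = Bp p y / (1 - y)"
    using prodinf_split_head[OF B_conv[of y]] False unfolding Bp_def by simp
  moreover have "(\<Prod>n. 1 - y * p ^ Suc n) = Bp p (p * y)"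
    unfolding Bp_def by (simp add: algebra_simps)
  ultimately show ?thesis using False by (simp add: field_simps)
qed

lemma B_holo: "Bp p holomorphic_on UNIV"
proof -
  have "Bp p holomorphic_on ball y0 1" for y0
  proof -
    let ?A = "cball y0 1"
    have uc: "uniformly_convergent_on ?A (\<lambda>N y. \<Prod>n<N. 1 - y * p ^ n)"
    proof (rule uniformly_convergent_on_prod')
      show "continuous_on ?A (\<lambda>y. 1 - y * p ^ n)" for n by (intro continuous_intros)
      show "compact ?A" by simp
      show "uniformly_convergent_on ?A (\<lambda>N y. \<Sum>n<N. norm (1 - y * p ^ n - 1))"
      proof (rule Weierstrass_m_test'[where M = "\<lambda>n. (norm y0 + 1) * norm p ^ n"])
        fix n y assume "y \<in> ?A"
        then have "norm y \<le> norm y0 + 1"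
          using norm_triangle_ineq2[of y y0] by (simp add: dist_norm norm_minus_commute)
        then show "norm (norm (1 - y * p ^ n - 1)) \<le> (norm y0 + 1) * norm p ^ n"
          by (simp add: norm_mult norm_power mult_right_mono)
      next
        show "summable (\<lambda>n. (norm y0 + 1) * norm p ^ n)"
          by (intro summable_mult summable_pk)
      qed
    qed
    then obtain g where g: "uniform_limit ?A (\<lambda>N y. \<Prod>n<N. 1 - y * p ^ n) g sequentially"
      unfolding uniformly_convergent_on_def by blast
    have geq: "g y = Bp p y" if "y \<in> ?A" for y
    proof -
      have "(\<lambda>N. \<Prod>n<N. 1 - y * p ^ n) \<longlonglongrightarrow> g y"
        using tendsto_uniform_limitI[OF g that] .
      moreover have "(\<lambda>N. \<Prod>n<N. 1 - y * p ^ n) \<longlonglongrightarrow> Bp p y"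
        using has_prod_imp_tendsto'[OF B_has_prod] .
      ultimately show ?thesis using LIMSEQ_unique by blast
    qed
    have "g holomorphic_on ball y0 1"
    proof (rule holomorphic_uniform_limit[OF _ g])
      show "\<forall>\<^sub>F n in sequentially. continuous_on ?A (\<lambda>y. \<Prod>n<n. 1 - y * p ^ n) \<and>
          (\<lambda>y. \<Prod>n<n. 1 - y * p ^ n) holomorphic_on ball y0 1"
        by (intro always_eventually allI conjI continuous_intros holomorphic_intros)
    qed auto
    then show ?thesis
      by (rule holomorphic_transform) (use geq in auto)
  qed
  note hb = this
  have "Bp p field_differentiable at y" for y
    using holomorphic_on_imp_differentiable_at[OF hb[of y] open_ball] by simp
  then show ?thesis by (simp add: holomorphic_on_def field_differentiable_at_within)
qed

end

context thp
begin

abbreviation T :: "complex \<Rightarrow> complex" where "T x \<equiv> theta x p"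

lemma B_diff: "(Bp p has_field_derivative deriv (Bp p) y) (at y within S)"
  by (rule holomorphic_derivI[OF B_holo]) auto

lemma theta_holo: "(\<lambda>x. theta x p) holomorphic_on -{0}"
proof -
  have h1: "(\<lambda>x. Bp p (p / x)) holomorphic_on -{0}"
  proof -
    have "(\<lambda>x. p / x) holomorphic_on -{0}" by (intro holomorphic_intros) auto
    from holomorphic_on_compose_gen[OF this B_holo] show ?thesis by (simp add: o_def)
  qed
  have "(\<lambda>x. Bp p x * Bp p (p / x)) holomorphic_on -{0}"
    by (intro holomorphic_intros h1 holomorphic_on_subset[OF B_holo]) auto
  then show ?thesis
    by (rule holomorphic_transform) (simp add: theta_eq)
qed

lemma theta_p: "x \<noteq> 0 \<Longrightarrow> T (p * x) = - T x / x"
proof -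
  assume x: "x \<noteq> 0"
  have a: "T (p * x) = Bp p (p * x) * ((1 - 1 / x) * Bp p (p / x))"
    using x p_ne0 B_shift[of "1/x"] by (simp add: theta_eq)
  have b: "T x = (1 - x) * Bp p (p * x) * Bp p (p / x)"
    using x B_shift[of x] by (simp add: theta_eq)
  show ?thesis unfolding a b using x by (simp add: field_simps)
qed

lemma theta_inv: "x \<noteq> 0 \<Longrightarrow> T (1 / x) = - T x / x"
proof -
  assume x: "x \<noteq> 0"
  have "T (1 / x) = Bp p (1 / x) * Bp p (p * x)"
    using x by (simp add: theta_eq)
  also have "\<dots> = T (p * x)"
    using x p_ne0 by (simp add: theta_eq)
  finally show ?thesis using theta_p[OF x] by simp
qed

definition Pset :: "complex set" where "Pset = range (\<lambda>k::int. p powi k)"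

lemma Pset_ne0: "y \<in> Pset \<Longrightarrow> y \<noteq> 0"
  using p_ne0 by (auto simp: Pset_def)

lemma Pset_mult: "a \<in> Pset \<Longrightarrow> b \<in> Pset \<Longrightarrow> a * b \<in> Pset"
proof -
  assume "a \<in> Pset" "b \<in> Pset"
  then obtain i j where ij: "a = p powi i" "b = p powi j" by (auto simp: Pset_def)
  then have "a * b = p powi (i + j)" using p_ne0 by (simp add: power_int_add)
  then show ?thesis unfolding Pset_def by blast
qed

lemma Pset_inv: "a \<in> Pset \<Longrightarrow> inverse a \<in> Pset"
proof -
  assume "a \<in> Pset"
  then obtain i where "a = p powi i" by (auto simp: Pset_def)
  then have "inverse a = p powi (- i)" by (simp add: power_int_minus)
  then show ?thesis unfolding Pset_def by blast
qed

lemma p_Pset: "p \<in> Pset"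
proof -
  have "p = p powi 1" by simp
  then show ?thesis unfolding Pset_def by blast
qed

lemma Pset_p: "a \<in> Pset \<Longrightarrow> p * a \<in> Pset"
  using Pset_mult[OF p_Pset] .

lemma theta_zero_iff: "x \<noteq> 0 \<Longrightarrow> T x = 0 \<longleftrightarrow> x \<in> Pset"
proof -
  assume x: "x \<noteq> 0"
  have "T x = 0 \<longleftrightarrow> (\<exists>k. x * p ^ k = 1) \<or> (\<exists>k. p / x * p ^ k = 1)"
    using x by (simp add: theta_eq B_zero_iff)
  also have "\<dots> \<longleftrightarrow> x \<in> Pset"
  proof
    assume "(\<exists>k. x * p ^ k = 1) \<or> (\<exists>k. p / x * p ^ k = 1)"
    then show "x \<in> Pset"
    proof
      assume "\<exists>k. x * p ^ k = 1"
      then obtain k where "x * p ^ k = 1" by blast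
      then have "x = p powi (- int k)"
        using p_ne0 by (simp add: power_int_minus field_simps)
      then show ?thesis by (auto simp: Pset_def)
    next
      assume "\<exists>k. p / x * p ^ k = 1"
      then obtain k where "p / x * p ^ k = 1" by blast
      then have "x = p ^ Suc k"
        using x p_ne0 by (simp add: field_simps)
      then have "x = p powi (int (Suc k))" by (simp only: power_int_of_nat)
      then show ?thesis by (auto simp: Pset_def)
    qed
  next
    assume "x \<in> Pset"
    then obtain k where k: "x = p powi k" by (auto simp: Pset_def)
    show "(\<exists>k. x * p ^ k = 1) \<or> (\<exists>k. p / x * p ^ k = 1)"
    proof (cases "k \<le> 0")
      case True
      then have "k = - int (nat (- k))" by simp
      then obtain n where "k = - int n" by blast
      then have "x * p ^ n = 1" using k p_ne0 by (simp add: power_int_minus)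
      then show ?thesis by blast
    next
      case False
      then have "k = int (Suc (nat (k - 1)))" by simp
      then obtain n where "k = int (Suc n)" by blast
      then have "x = p ^ Suc n" using k by (simp only: power_int_of_nat)
      then have "p / x * p ^ n = 1" using p_ne0 by simp
      then show ?thesis by blast
    qed
  qed
  finally show ?thesis .
qed

lemma theta_deriv: "x \<noteq> 0 \<Longrightarrow> ((\<lambda>x. T x) has_field_derivative deriv (\<lambda>x. T x) x) (at x within S)"
  by (rule holomorphic_derivI[OF theta_holo]) (auto intro: open_Compl)

lemma theta_eq2: "x \<noteq> 0 \<Longrightarrow> T x = (1 - x) * (Bp p (p * x) * Bp p (p / x))"
  using B_shift[of x] by (simp add: theta_eq)

lemma deriv_theta_1: "deriv (\<lambda>x. T x) 1 \<noteq> 0"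
proof -
  define g where "g x = (1 - x) * (Bp p (p * x) * Bp p (p / x))" for x
  have d1: "((\<lambda>x. Bp p (p * x)) has_field_derivative deriv (Bp p) (p * 1) * p) (at 1)"
    by (rule DERIV_chain2[OF B_diff]) (intro derivative_eq_intros, auto)
  have d2: "((\<lambda>x. Bp p (p / x)) has_field_derivative deriv (Bp p) (p / 1) * (- p / 1 ^ 2)) (at 1)"
    by (rule DERIV_chain2[OF B_diff]) (intro derivative_eq_intros, auto simp: power2_eq_square)
  have d0: "((\<lambda>x. 1 - x) has_field_derivative -1) (at 1)"
    by (intro derivative_eq_intros) auto
  have "(g has_field_derivative - (Bp p p * Bp p p)) (at 1)"
    unfolding g_def by (rule DERIV_cong[OF DERIV_mult[OF d0 DERIV_mult[OF d1 d2]]]) simp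
  then have "((\<lambda>x. T x) has_field_derivative - (Bp p p * Bp p p)) (at 1)"
    by (rule has_field_derivative_transform_within_open[where S = "-{0}"])
       (auto simp: g_def theta_eq2)
  then have "deriv (\<lambda>x. T x) 1 = - (Bp p p * Bp p p)" by (rule DERIV_imp_deriv)
  moreover have "Bp p p \<noteq> 0"
  proof
    assume "Bp p p = 0"
    then obtain k where "p * p ^ k = 1" by (auto simp: B_zero_iff)
    then have "norm (p * p ^ k) = 1" by simp
    then have "norm p ^ Suc k = 1" by (simp add: norm_mult norm_power)
    moreover have "norm p ^ Suc k < 1" using p0 p1 by (intro power_Suc_less_one) auto
    ultimately show False by simp
  qed
  ultimately show ?thesis by simp
qed

lemma deriv_theta_p:
  assumes x: "x \<noteq> 0" and Tx: "T x = 0"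
  shows "deriv (\<lambda>x. T x) (p * x) = - deriv (\<lambda>x. T x) x / (p * x)"
proof -
  have d1: "((\<lambda>y. T (p * y)) has_field_derivative deriv (\<lambda>x. T x) (p * x) * p) (at x)"
    by (intro DERIV_chain2[OF theta_deriv] derivative_eq_intros) (use x p_ne0 in auto)
  have dT: "((\<lambda>x. T x) has_field_derivative deriv (\<lambda>x. T x) x) (at x)" using theta_deriv[OF x] .
  note d2 = DERIV_divide[OF DERIV_minus[OF dT] DERIV_ident]
  have d3: "((\<lambda>y. T (p * y)) has_field_derivative (- deriv (\<lambda>x. T x) x * x - (- T x) * 1) / (x * x)) (at x)"
    by (rule has_field_derivative_transform_within_open[OF d2, where S = "-{0}"])
       (use x in \<open>auto simp: theta_p\<close>)
  have "deriv (\<lambda>x. T x) (p * x) * p = (- deriv (\<lambda>x. T x) x * x - (- T x) * 1) / (x * x)"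
    using DERIV_unique[OF d1 d3] .
  then show ?thesis using x p_ne0 Tx by (simp add: field_simps)
qed

lemma deriv_theta_nz: "y \<in> Pset \<Longrightarrow> deriv (\<lambda>x. T x) y \<noteq> 0"
proof -
  have zero: "T y = 0" if "y \<in> Pset" for y
    using theta_zero_iff[OF Pset_ne0[OF that]] that by simp
  have pos: "deriv (\<lambda>x. T x) (p ^ n) \<noteq> 0" for n
  proof (induction n)
    case 0 then show ?case using deriv_theta_1 by simp
  next
    case (Suc n)
    have pn: "p ^ n \<in> Pset" by (auto simp: Pset_def intro!: image_eqI[where x = "int n"])
    show ?case
      using deriv_theta_p[OF Pset_ne0[OF pn] zero[OF pn]] Suc p_ne0 by simp
  qed
  have neg: "deriv (\<lambda>x. T x) (inverse (p ^ n)) \<noteq> 0" for n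
  proof (induction n)
    case 0 then show ?case using deriv_theta_1 by simp
  next
    case (Suc n)
    have "inverse (p ^ Suc n) = p powi (- int (Suc n))" by (simp only: power_int_minus power_int_of_nat)
    then have pn: "inverse (p ^ Suc n) \<in> Pset"
      by (auto simp: Pset_def)
    have e: "p * inverse (p ^ Suc n) = inverse (p ^ n)" using p_ne0 by simp
    have "deriv (\<lambda>x. T x) (p * inverse (p ^ Suc n)) = - deriv (\<lambda>x. T x) (inverse (p ^ Suc n)) / (p * inverse (p ^ Suc n))"
      by (rule deriv_theta_p[OF Pset_ne0[OF pn] zero[OF pn]])
    then have e2: "deriv (\<lambda>x. T x) (inverse (p ^ n)) = - deriv (\<lambda>x. T x) (inverse (p ^ Suc n)) / inverse (p ^ n)"
      by (simp only: e)
    show ?case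
    proof
      assume z: "deriv (\<lambda>x. T x) (inverse (p ^ Suc n)) = 0"
      have "deriv (\<lambda>x. T x) (inverse (p ^ n)) = 0" using e2 by (simp only: z minus_zero div_0)
      with Suc.IH show False by contradiction
    qed
  qed
  assume "y \<in> Pset"
  then obtain k where k: "y = p powi k" by (auto simp: Pset_def)
  show ?thesis
  proof (cases "k \<ge> 0")
    case True
    then have "k = int (nat k)" by simp
    then obtain n where "k = int n" by blast
    then show ?thesis using k pos by simp
  next
    case False
    then have "k = - int (nat (- k))" by simp
    then obtain n where "k = - int n" by blast
    then show ?thesis using k neg by (simp add: power_int_minus)
  qed
qed

end

lemma quot_lim:
  fixes f g :: "complex \<Rightarrow> complex"
  assumes df: "(f has_field_derivative D) (at x0)" and D: "D \<noteq> 0" and f0: "f x0 = 0"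
    and dg: "(g has_field_derivative E) (at x0)" and g0: "g x0 = 0"
  shows "((\<lambda>y. g y / f y) \<longlongrightarrow> E / D) (at x0)" and "eventually (\<lambda>y. f y \<noteq> 0) (at x0)"
proof -
  have lf: "((\<lambda>y. f y / (y - x0)) \<longlongrightarrow> D) (at x0)"
    using df unfolding has_field_derivative_iff by (simp add: f0)
  have lg: "((\<lambda>y. g y / (y - x0)) \<longlongrightarrow> E) (at x0)"
    using dg unfolding has_field_derivative_iff by (simp add: g0)
  have l: "((\<lambda>y. (g y / (y - x0)) / (f y / (y - x0))) \<longlongrightarrow> E / D) (at x0)"
    by (rule tendsto_divide[OF lg lf D])
  have ev: "eventually (\<lambda>y. (g y / (y - x0)) / (f y / (y - x0)) = g y / f y) (at x0)"
    unfolding eventually_at_filter by (intro always_eventually) auto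
  show "((\<lambda>y. g y / f y) \<longlongrightarrow> E / D) (at x0)"
    by (rule iffD1[OF tendsto_cong[OF ev] l])
  have "eventually (\<lambda>y. f y / (y - x0) \<noteq> 0) (at x0)"
    by (rule tendsto_imp_eventually_ne[OF lf D])
  then show "eventually (\<lambda>y. f y \<noteq> 0) (at x0)"
    by eventually_elim auto
qed

context thp
begin

definition fz :: "complex \<Rightarrow> complex \<Rightarrow> complex" where
  "fz t x = T (t * x) * T (t / x) / t"

definition Wfun :: "(complex \<Rightarrow> complex) \<Rightarrow> bool" where
  "Wfun G \<longleftrightarrow> G holomorphic_on -{0} \<and> (\<forall>x. x \<noteq> 0 \<longrightarrow> G (p * x) = G x / (p * x ^ 2))
      \<and> (\<forall>x. x \<noteq> 0 \<longrightarrow> G (1 / x) = G x)"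

lemma open_C0: "open (-{0::complex})" by (simp add: open_Compl)

lemma fz_holo: "t \<noteq> 0 \<Longrightarrow> fz t holomorphic_on -{0}"
proof -
  assume t: "t \<noteq> 0"
  have h1: "(\<lambda>x. T (t * x)) holomorphic_on -{0}"
  proof -
    have "(\<lambda>x. t * x) holomorphic_on -{0}" by (intro holomorphic_intros)
    moreover have "(\<lambda>x. t * x) ` (-{0}) \<subseteq> -{0}" using t by auto
    ultimately show ?thesis using holomorphic_on_compose_gen[OF _ theta_holo] by (simp add: o_def)
  qed
  have h2: "(\<lambda>x. T (t / x)) holomorphic_on -{0}"
  proof -
    have "(\<lambda>x. t / x) holomorphic_on -{0}" by (intro holomorphic_intros) auto
    moreover have "(\<lambda>x. t / x) ` (-{0}) \<subseteq> -{0}" using t by auto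
    ultimately show ?thesis using holomorphic_on_compose_gen[OF _ theta_holo] by (simp add: o_def)
  qed
  show ?thesis unfolding fz_def by (intro holomorphic_intros h1 h2 t)
qed

lemma fz_W: "t \<noteq> 0 \<Longrightarrow> Wfun (fz t)"
proof -
  assume t: "t \<noteq> 0"
  have per: "fz t (p * x) = fz t x / (p * x ^ 2)" if x: "x \<noteq> 0" for x
  proof -
    have a: "T (t * (p * x)) = - T (t * x) / (t * x)"
      using theta_p[of "t * x"] t x by (simp add: mult.left_commute)
    have "T (p * (t / (p * x))) = - T (t / (p * x)) / (t / (p * x))"
      using theta_p[of "t / (p * x)"] t x p_ne0 by simp
    then have "T (t / x) = - T (t / (p * x)) / (t / (p * x))"
      using p_ne0 by simp
    then have b: "T (t / (p * x)) = - (t / (p * x)) * T (t / x)"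
      using t x p_ne0 by (simp add: field_simps)
    show ?thesis unfolding fz_def a b using t x p_ne0 by (simp add: field_simps power2_eq_square)
  qed
  have inv: "fz t (1 / x) = fz t x" if x: "x \<noteq> 0" for x
    unfolding fz_def by simp
  show ?thesis unfolding Wfun_def using fz_holo[OF t] per inv by blast
qed

lemma W_lin: "Wfun G \<Longrightarrow> Wfun H \<Longrightarrow> Wfun (\<lambda>x. G x - c * H x)"
proof -
  assume G: "Wfun G" and H: "Wfun H"
  have "(\<lambda>x. G x - c * H x) holomorphic_on -{0}"
    using G H unfolding Wfun_def by (intro holomorphic_intros) auto
  moreover have "G (p * x) - c * H (p * x) = (G x - c * H x) / (p * x ^ 2)" if "x \<noteq> 0" for x
  proof -
    have "G (p * x) = G x / (p * x ^ 2)" "H (p * x) = H x / (p * x ^ 2)"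
      using G H that unfolding Wfun_def by auto
    then show ?thesis by (simp add: diff_divide_distrib)
  qed
  moreover have "G (1 / x) - c * H (1 / x) = G x - c * H x" if "x \<noteq> 0" for x
    using G H that unfolding Wfun_def by auto
  ultimately show ?thesis unfolding Wfun_def by blast
qed

lemma W_orbit:
  assumes G: "Wfun G" and x: "x \<noteq> 0" and Gx: "G x = 0" and y: "y \<in> Pset"
  shows "G (y * x) = 0"
proof -
  have per: "G (p * w) = G w / (p * w ^ 2)" if "w \<noteq> 0" for w
    using G that unfolding Wfun_def by blast
  have pos: "G (p ^ n * x) = 0" for n
  proof (induction n)
    case 0 then show ?case using Gx by simp
  next
    case (Suc n)
    have "G (p * (p ^ n * x)) = 0" using per[of "p ^ n * x"] Suc x p_ne0 by simp
    then show ?case by (simp add: mult.assoc)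
  qed
  have neg: "G (inverse (p ^ n) * x) = 0" for n
  proof (induction n)
    case 0 then show ?case using Gx by simp
  next
    case (Suc n)
    define w where "w = inverse (p ^ Suc n) * x"
    have w0: "w \<noteq> 0" using x p_ne0 by (simp add: w_def)
    have "p * w = inverse (p ^ n) * x" using p_ne0 by (simp add: w_def)
    then have "G w / (p * w ^ 2) = 0" using per[OF w0] Suc by simp
    then have "G w = 0" using w0 p_ne0 by simp
    then show ?case by (simp add: w_def)
  qed
  from y obtain k where k: "y = p powi k" by (auto simp: Pset_def)
  show ?thesis
  proof (cases "k \<ge> 0")
    case True
    then have "k = int (nat k)" by simp
    then obtain n where "k = int n" by blast
    then show ?thesis using k pos by simp
  next
    case False
    then have "k = - int (nat (- k))" by simp
    then obtain n where "k = - int n" by blast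
    then show ?thesis using k neg by (simp add: power_int_minus)
  qed
qed

lemma fz_zero_G:
  assumes G: "Wfun G" and t: "t \<noteq> 0" and Gt: "G t = 0" and x: "x \<noteq> 0" and f: "fz t x = 0"
  shows "G x = 0"
proof -
  have "T (t * x) = 0 \<or> T (t / x) = 0" using f t by (simp add: fz_def)
  then show ?thesis
  proof
    assume "T (t * x) = 0"
    then have y: "t * x \<in> Pset" using theta_zero_iff[of "t * x"] t x by simp
    have "G (1 / t) = 0" using G Gt t unfolding Wfun_def by auto
    then have "G ((t * x) * (1 / t)) = 0" using W_orbit[OF G _ _ y, of "1/t"] t by simp
    then show ?thesis using t by simp
  next
    assume "T (t / x) = 0"
    then have y: "t / x \<in> Pset" using theta_zero_iff[of "t / x"] t x by simp
    have "G (inverse (t / x) * t) = 0" using W_orbit[OF G t Gt Pset_inv[OF y]] .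
    then show ?thesis using t by simp
  qed
qed

lemma fz_simple:
  assumes t: "t \<noteq> 0" and t2: "T (t ^ 2) \<noteq> 0" and x0: "x0 \<noteq> 0" and f: "fz t x0 = 0"
  shows "\<exists>D. D \<noteq> 0 \<and> (fz t has_field_derivative D) (at x0)"
proof -
  have tx: "t * x0 \<noteq> 0" "t / x0 \<noteq> 0" using t x0 by auto
  have a: "((\<lambda>x. T (t * x)) has_field_derivative deriv (\<lambda>x. T x) (t * x0) * t) (at x0)"
    by (rule DERIV_chain2[where g="\<lambda>x. t * x" and x=x0, OF theta_deriv[OF tx(1), where S=UNIV]]) (intro derivative_eq_intros, auto)
  have b: "((\<lambda>x. T (t / x)) has_field_derivative deriv (\<lambda>x. T x) (t / x0) * (- t / x0 ^ 2)) (at x0)"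
    by (rule DERIV_chain2[where g="\<lambda>x. t / x" and x=x0, OF theta_deriv[OF tx(2), where S=UNIV]]) (intro derivative_eq_intros, auto simp: power2_eq_square x0)
  note d = DERIV_cdivide[OF DERIV_mult[OF a b], of t]
  have dd: "(fz t has_field_derivative
      (deriv (\<lambda>x. T x) (t * x0) * t * T (t / x0) + deriv (\<lambda>x. T x) (t / x0) * (- t / x0 ^ 2) * T (t * x0)) / t) (at x0)"
    using d unfolding fz_def[abs_def] .
  have not_both: "\<not> (T (t * x0) = 0 \<and> T (t / x0) = 0)"
  proof
    assume "T (t * x0) = 0 \<and> T (t / x0) = 0"
    then have "t * x0 \<in> Pset" "t / x0 \<in> Pset" using theta_zero_iff tx by auto
    then have "(t * x0) * (t / x0) \<in> Pset" by (rule Pset_mult)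
    then have "t ^ 2 \<in> Pset" using x0 by (simp add: power2_eq_square)
    then show False using t2 theta_zero_iff[of "t^2"] t by simp
  qed
  have "T (t * x0) = 0 \<or> T (t / x0) = 0" using f t by (simp add: fz_def)
  then have "(deriv (\<lambda>x. T x) (t * x0) * t * T (t / x0) + deriv (\<lambda>x. T x) (t / x0) * (- t / x0 ^ 2) * T (t * x0)) / t \<noteq> 0"
  proof
    assume z: "T (t * x0) = 0"
    then have "T (t / x0) \<noteq> 0" using not_both by blast
    moreover have "deriv (\<lambda>x. T x) (t * x0) \<noteq> 0"
      using deriv_theta_nz theta_zero_iff[OF tx(1)] z by simp
    ultimately show ?thesis using z t by simp
  next
    assume z: "T (t / x0) = 0"
    then have "T (t * x0) \<noteq> 0" using not_both by blast
    moreover have "deriv (\<lambda>x. T x) (t / x0) \<noteq> 0"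
      using deriv_theta_nz theta_zero_iff[OF tx(2)] z by simp
    ultimately show ?thesis using z t x0 by simp
  qed
  then show ?thesis using dd by blast
qed

end

lemma frac_cancel: "c \<noteq> 0 \<Longrightarrow> (a / c) / (b / c) = a / (b :: complex)"
  by (cases "b = 0") (simp_all add: field_simps)

context thp
begin

lemma exists_K:
  assumes x: "x \<noteq> 0"
  shows "\<exists>k::int. norm p \<le> norm (p powi k * x) \<and> norm (p powi k * x) \<le> 1"
proof -
  define L where "L = ln (norm p)"
  define m where "m = ln (norm x)"
  define r where "r = - m / L"
  define k where "k = \<lceil>r\<rceil>"
  have hL: "L < 0" unfolding L_def using p0 p1 by simp
  have "r \<le> of_int k" unfolding k_def by simp
  from mult_right_mono_neg[OF this, of L] hL have h1: "of_int k * L \<le> - m"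
    unfolding r_def by simp
  have "of_int k - 1 < r" unfolding k_def using ceiling_correct[of r] by simp
  then have "of_int k < r + 1" by simp
  from mult_strict_right_mono_neg[OF this hL] have h2: "L - m < of_int k * L"
    unfolding r_def using hL by (simp add: algebra_simps)
  have nk: "norm (p powi k) = exp (of_int k * L)"
  proof -
    have "norm (p powi k) = norm p powi k" by (rule norm_power_int)
    also have "\<dots> = norm p powr real_of_int k"
      using p0 by (simp add: powr_real_of_int')
    also have "\<dots> = exp (of_int k * L)" using p0 by (simp add: powr_def L_def)
    finally show ?thesis .
  qed
  have nx: "norm x = exp m" using x by (simp add: m_def)
  have ny: "norm (p powi k * x) = exp (of_int k * L + m)"
    by (simp add: norm_mult nk nx exp_add)
  have "exp (of_int k * L + m) \<le> exp 0" using h1 by simp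
  moreover have "exp L \<le> exp (of_int k * L + m)" using h2 by simp
  moreover have "exp L = norm p" using p0 by (simp add: L_def)
  ultimately have "norm p \<le> norm (p powi k * x)" "norm (p powi k * x) \<le> 1" unfolding ny by simp_all
  then show ?thesis by blast
qed

lemma W_unique:
  assumes G: "Wfun G" and z: "z \<noteq> 0" and z2: "T (z ^ 2) \<noteq> 0" and Gz: "G z = 0"
  shows "\<exists>C. \<forall>x. x \<noteq> 0 \<longrightarrow> G x = C * fz z x"
proof -
  define f where "f = fz z"
  define h where "h = (\<lambda>x. G x / f x)"
  define H where "H = remove_sings h"
  have fW: "Wfun f" using fz_W[OF z] by (simp add: f_def)
  have Gh: "G holomorphic_on -{0}" and fh: "f holomorphic_on -{0}"
    using G fW by (auto simp: Wfun_def)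
  have Gc: "isCont G x" if "x \<noteq> 0" for x
    using holomorphic_on_imp_continuous_on[OF Gh] continuous_on_eq_continuous_at[OF open_C0] that by blast
  have fc: "isCont f x" if "x \<noteq> 0" for x
    using holomorphic_on_imp_continuous_on[OF fh] continuous_on_eq_continuous_at[OF open_C0] that by blast
  have dG: "(G has_field_derivative deriv G x) (at x)" if "x \<noteq> 0" for x
    using holomorphic_derivI[OF Gh open_C0] that by blast
  have hc: "(h \<longlongrightarrow> h x) (at x)" if "x \<noteq> 0" "f x \<noteq> 0" for x
  proof -
    have "isCont h x" unfolding h_def using Gc[OF that(1)] fc[OF that(1)] that(2)
      by (intro continuous_intros) auto
    then show ?thesis by (simp add: isCont_def)
  qed
  have loc: "(\<exists>c. (h \<longlongrightarrow> c) (at x0)) \<and> eventually (\<lambda>y. f y \<noteq> 0) (at x0)" if x0: "x0 \<noteq> 0" for x0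
  proof (cases "f x0 = 0")
    case True
    obtain D where D: "D \<noteq> 0" "(f has_field_derivative D) (at x0)"
      using fz_simple[OF z z2 x0] True unfolding f_def by blast
    have G0: "G x0 = 0" using fz_zero_G[OF G z Gz x0] True unfolding f_def by simp
    from quot_lim[OF D(2) D(1) True dG[OF x0] G0] show ?thesis unfolding h_def by blast
  next
    case False
    have "(f \<longlongrightarrow> f x0) (at x0)" using fc[OF x0] by (simp add: isCont_def)
    from tendsto_imp_eventually_ne[OF this False] show ?thesis using hc[OF x0 False] by blast
  qed
  have iso: "isolated_singularity_at h x0" if x0: "x0 \<noteq> 0" for x0
  proof -
    have ev: "eventually (\<lambda>y. f y \<noteq> 0) (at x0)" using loc[OF x0] by blast
    then obtain d where d: "d > 0" "\<And>y. y \<noteq> x0 \<Longrightarrow> dist y x0 < d \<Longrightarrow> f y \<noteq> 0"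
      unfolding eventually_at by auto
    define r where "r = min d (norm x0)"
    have r: "r > 0" using d x0 by (simp add: r_def)
    have sub: "y \<noteq> 0 \<and> f y \<noteq> 0" if "y \<in> ball x0 r - {x0}" for y
    proof
      show "y \<noteq> 0"
      proof
        assume "y = 0"
        then have "dist y x0 = norm x0" by (simp add: dist_norm)
        then show False using that by (simp add: r_def dist_commute)
      qed
      show "f y \<noteq> 0" using that d(2)[of y] by (simp add: r_def dist_commute)
    qed
    have "h holomorphic_on (ball x0 r - {x0})"
      unfolding h_def
    proof (intro holomorphic_intros)
      show "G holomorphic_on ball x0 r - {x0}" by (rule holomorphic_on_subset[OF Gh]) (use sub in blast)
      show "f holomorphic_on ball x0 r - {x0}" by (rule holomorphic_on_subset[OF fh]) (use sub in blast)
    qed (use sub in blast)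
    then have "h analytic_on ball x0 r - {x0}" by (simp add: analytic_on_open open_Diff)
    then show ?thesis unfolding isolated_singularity_at_def using r by blast
  qed
  have Han: "H analytic_on {x0}" if "x0 \<noteq> 0" for x0
    using loc[OF that] iso[OF that] remove_sings_analytic_at unfolding H_def by blast
  have Hholo: "H holomorphic_on -{0}"
  proof -
    have "H analytic_on -{0}" using Han analytic_on_analytic_at by blast
    then show ?thesis by (rule analytic_imp_holomorphic)
  qed
  have Hh: "H x = h x" if "x \<noteq> 0" "f x \<noteq> 0" for x
    unfolding H_def by (rule remove_sings_eqI[OF hc[OF that]])
  have hp: "h (p * y) = h y" for y
  proof (cases "y = 0")
    case True then show ?thesis by simp
  next
    case False
    have "G (p * y) = G y / (p * y ^ 2)" "f (p * y) = f y / (p * y ^ 2)"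
      using G fW False unfolding Wfun_def by auto
    then show ?thesis unfolding h_def using False p_ne0 by (simp add: frac_cancel)
  qed
  have Hp: "H (p * x) = H x" for x
  proof -
    have fm: "filtermap ((*) p) (at x) = at (p * x)"
    proof (rule filtermap_nhds_eq_imp_filtermap_at_eq)
      show "filtermap ((*) p) (nhds x) = nhds (p * x)" using p_ne0 by (rule filtermap_nhds_times)
      show "\<forall>\<^sub>F y in at x. p * y = p * x \<longrightarrow> y = x" using p_ne0 by (intro always_eventually) simp
    qed
    have "h \<circ> (*) p = h" by (rule ext) (simp add: hp)
    then have "remove_sings h x = remove_sings h (p * x)"
      using remove_sings_compose[OF fm, of h] by simp
    then show ?thesis unfolding H_def by simp
  qed
  have Hpos: "H (p ^ n * x) = H x" for n x
    by (induction n) (simp_all add: mult.assoc Hp)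
  have Hneg: "H (inverse (p ^ n) * x) = H x" for n x
  proof -
    have "H (p ^ n * (inverse (p ^ n) * x)) = H (inverse (p ^ n) * x)" by (rule Hpos)
    moreover have "p ^ n * (inverse (p ^ n) * x) = x" using p_ne0 by (simp add: mult.assoc[symmetric])
    ultimately show ?thesis by simp
  qed
  have Hpowi: "H (p powi k * x) = H x" for k x
  proof (cases "k \<ge> 0")
    case True
    then have "k = int (nat k)" by simp
    then obtain n where "k = int n" by blast
    then show ?thesis using Hpos by simp
  next
    case False
    then have "k = - int (nat (- k))" by simp
    then obtain n where "k = - int n" by blast
    then show ?thesis using Hneg by (simp add: power_int_minus)
  qed
  define K where "K = {y::complex. norm p \<le> norm y \<and> norm y \<le> 1}"
  have Kc: "compact K"
  proof -
    have "closed K" unfolding K_def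
      by (intro closed_Collect_conj closed_Collect_le continuous_intros)
    moreover have "K \<subseteq> cball 0 1" unfolding K_def by auto
    then have "bounded K" using bounded_subset[OF bounded_cball] by blast
    ultimately show ?thesis using compact_eq_bounded_closed by blast
  qed
  have K0: "K \<subseteq> -{0}" unfolding K_def using p0 by auto
  have "continuous_on K H"
    by (rule continuous_on_subset[OF holomorphic_on_imp_continuous_on[OF Hholo] K0])
  then have "compact (H ` K)" using Kc by (rule compact_continuous_image)
  then have "bounded (H ` K)" by (rule compact_imp_bounded)
  then obtain B where B0: "\<forall>y\<in>H ` K. norm y \<le> B" unfolding bounded_iff by (elim exE)
  have B: "norm (H y) \<le> B" if "y \<in> K" for y using B0 that by blast
  have Hbd: "norm (H x) \<le> B" if x: "x \<noteq> 0" for x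
  proof -
    obtain k :: int where k: "norm p \<le> norm (p powi k * x)" "norm (p powi k * x) \<le> 1"
      using exists_K[OF x] by blast
    have "p powi k * x \<in> K" unfolding K_def using k by simp
    then have "norm (H (p powi k * x)) \<le> B" by (rule B)
    then show ?thesis using Hpowi[of k x] by simp
  qed
  have Eholo: "(\<lambda>w. H (exp w)) holomorphic_on UNIV"
  proof -
    have "exp ` UNIV \<subseteq> -{0}" by auto
    from holomorphic_on_compose_gen[OF _ Hholo this] show ?thesis
      by (simp add: o_def holomorphic_on_exp)
  qed
  have Ebd: "bounded (range (\<lambda>w. H (exp w)))"
    unfolding bounded_iff using Hbd by (intro exI[of _ B]) auto
  from Liouville_theorem[OF Eholo Ebd] obtain C where C: "\<And>w. H (exp w) = C"
    unfolding constant_on_def by blast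
  have HC: "H x = C" if "x \<noteq> 0" for x
    using C[of "Ln x"] that by (simp add: exp_Ln)
  have "G x = C * f x" if x: "x \<noteq> 0" for x
  proof (cases "f x = 0")
    case True
    then show ?thesis using fz_zero_G[OF G z Gz x] unfolding f_def by simp
  next
    case False
    have "G x = h x * f x" unfolding h_def using False by simp
    then show ?thesis using Hh[OF x False] HC[OF x] by simp
  qed
  then show ?thesis unfolding f_def by blast
qed

end

context thp
begin

lemma Pset_countable: "countable Pset"
  unfolding Pset_def by simp

lemma exists_generic:
  assumes t1: "t1 \<noteq> 0"
  shows "\<exists>z. z \<noteq> 0 \<and> T (z ^ 2) \<noteq> 0 \<and> T (t1 * z) \<noteq> 0 \<and> T (t1 / z) \<noteq> 0"
proof -
  define Bad where "Bad = insert 0 (csqrt ` Pset \<union> (\<lambda>y. - csqrt y) ` Pset \<union> (\<lambda>y. y / t1) ` Pset \<union> (\<lambda>y. t1 / y) ` Pset)"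
  have "countable Bad" unfolding Bad_def using Pset_countable by simp
  then have "Bad \<noteq> UNIV" using uncountable_UNIV_complex by metis
  then obtain z where z: "z \<notin> Bad" by blast
  have z0: "z \<noteq> 0" using z by (simp add: Bad_def)
  have "z ^ 2 \<notin> Pset"
  proof
    assume "z ^ 2 \<in> Pset"
    moreover have "z = csqrt (z ^ 2) \<or> z = - csqrt (z ^ 2)"
      using power2_eq_iff[of z "csqrt (z^2)"] by simp
    ultimately have "z \<in> Bad" unfolding Bad_def by blast
    with z show False by simp
  qed
  then have a: "T (z ^ 2) \<noteq> 0" using theta_zero_iff[of "z^2"] z0 by simp
  have "t1 * z \<notin> Pset"
  proof
    assume "t1 * z \<in> Pset"
    moreover have "z = (t1 * z) / t1" using t1 by simp
    ultimately have "z \<in> Bad" unfolding Bad_def by blast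
    with z show False by simp
  qed
  then have b: "T (t1 * z) \<noteq> 0" using theta_zero_iff[of "t1 * z"] z0 t1 by simp
  have "t1 / z \<notin> Pset"
  proof
    assume "t1 / z \<in> Pset"
    moreover have "z = t1 / (t1 / z)" using t1 z0 by simp
    ultimately have "z \<in> Bad" unfolding Bad_def by blast
    with z show False by simp
  qed
  then have c: "T (t1 / z) \<noteq> 0" using theta_zero_iff[of "t1 / z"] z0 t1 by simp
  show ?thesis using z0 a b c by blast
qed

lemma T1: "T 1 = 0"
proof -
  have "(1::complex) = p powi 0" by simp
  then have "1 \<in> Pset" unfolding Pset_def by blast
  then show ?thesis using theta_zero_iff[of 1] by simp
qed

lemma fz_self: "fz t t = 0"
  by (cases "t = 0") (simp_all add: fz_def T1)

lemma key:
  assumes t0: "t0 \<noteq> 0" and t1: "t1 \<noteq> 0" and t2: "t2 \<noteq> 0"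
    and n1: "T (t1 * t2) \<noteq> 0" and n2: "T (t1 / t2) \<noteq> 0"
    and F1: "fz t0 t1 - A * fz t1 t1 - B * fz t2 t1 = 0"
    and F2: "fz t0 t2 - A * fz t1 t2 - B * fz t2 t2 = 0"
    and x: "x \<noteq> 0"
  shows "fz t0 x = A * fz t1 x + B * fz t2 x"
proof -
  define F where "F x = fz t0 x - A * fz t1 x - B * fz t2 x" for x
  have FW: "Wfun F" unfolding F_def
    by (intro W_lin fz_W t0 t1 t2)
  obtain z where z: "z \<noteq> 0" "T (z ^ 2) \<noteq> 0" "T (t1 * z) \<noteq> 0" "T (t1 / z) \<noteq> 0"
    using exists_generic[OF t1] by blast
  have f1z: "fz t1 z \<noteq> 0" using z t1 by (simp add: fz_def)
  define c0 where "c0 = F z / fz t1 z"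
  define G where "G x = F x - c0 * fz t1 x" for x
  have GW: "Wfun G" unfolding G_def by (intro W_lin FW fz_W t1)
  have Gz: "G z = 0" unfolding G_def c0_def using f1z by simp
  obtain C where C: "\<And>x. x \<noteq> 0 \<Longrightarrow> G x = C * fz z x"
    using W_unique[OF GW z(1) z(2) Gz] by blast
  have Ft1: "F t1 = 0" using F1 by (simp add: F_def)
  have Ft2: "F t2 = 0" using F2 by (simp add: F_def)
  have "G t1 = 0" unfolding G_def using Ft1 by (simp add: fz_self)
  moreover have "fz z t1 \<noteq> 0"
  proof -
    have "T (z * t1) \<noteq> 0" using z by (simp add: mult.commute)
    moreover have "T (z / t1) = - T (t1 / z) / (t1 / z)"
      using theta_inv[of "t1 / z"] z t1 by simp
    then have "T (z / t1) \<noteq> 0" using z t1 by simp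
    ultimately show ?thesis using z t1 by (simp add: fz_def)
  qed
  ultimately have C0: "C = 0" using C[OF t1] by simp
  have "F t2 = c0 * fz t1 t2" using C[OF t2] C0 unfolding G_def by simp
  moreover have "fz t1 t2 \<noteq> 0" using n1 n2 t1 by (simp add: fz_def)
  ultimately have c00: "c0 = 0" using Ft2 by simp
  have "F x = 0" using C[OF x] C0 c00 unfolding G_def by simp
  then show ?thesis unfolding F_def by (simp add: algebra_simps)
qed

end

context thp
begin

lemma Tinv: "w \<noteq> 0 \<Longrightarrow> T (inverse w) = - T w / w"
  using theta_inv[of w] by (simp add: inverse_eq_divide)

lemma case1:
  assumes qa: "qa \<noteq> 0" and q1: "q1 \<noteq> 0" and t0: "t0 \<noteq> 0" and Ta: "T qa \<noteq> 0" and Tu: "T (u * q1) \<noteq> 0"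
    and t1: "t1 = qa * q1 * t0" and t2: "t2 = q1 * t0" and u: "u = qa * q1 * t0 ^ 2"
    and A: "A = T q1 * T (inverse qa * u) / (T (inverse qa) * T (u * q1))"
    and B: "B = T (qa * q1) * T u / (T qa * T (u * q1))"
  shows "fz t0 t1 - A * fz t1 t1 - B * fz t2 t1 = 0" and "fz t0 t2 - A * fz t1 t2 - B * fz t2 t2 = 0"
proof -
  have e1: "t0 * t1 = u" and e2: "t0 / t1 = inverse (qa * q1)" and e3: "t2 * t1 = u * q1"
    and e4: "t2 / t1 = inverse qa" and e5: "t0 * t2 = inverse qa * u" and e6: "t0 / t2 = inverse q1"
    and e7: "t1 * t2 = u * q1" and e8: "t1 / t2 = qa"
    unfolding t1 t2 u using qa q1 t0 by (simp_all add: field_simps power2_eq_square)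
  have i1: "T (inverse (qa * q1)) = - T (qa * q1) / (qa * q1)" by (rule Tinv) (use qa q1 in simp)
  have i2: "T (inverse qa) = - T qa / qa" using Tinv qa by simp
  have i3: "T (inverse q1) = - T q1 / q1" using Tinv q1 by simp
  have ti: "T (inverse qa) \<noteq> 0" using i2 Ta qa by simp
  show "fz t0 t1 - A * fz t1 t1 - B * fz t2 t1 = 0"
    unfolding fz_self unfolding fz_def e1 e2 e3 e4 i1 i2 B
    using qa q1 t0 Ta Tu by (simp add: t2 field_simps)
  show "fz t0 t2 - A * fz t1 t2 - B * fz t2 t2 = 0"
    unfolding fz_self unfolding fz_def e5 e6 e7 e8 i3 A i2
    using qa q1 t0 Ta Tu by (simp add: t1 field_simps)
qed

lemma case2:
  assumes qa: "qa \<noteq> 0" and q1: "q1 \<noteq> 0" and t0: "t0 \<noteq> 0" and Ta: "T qa \<noteq> 0" and Tu: "T (u * q1) \<noteq> 0"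
    and t1: "t1 = q1 * t0" and t2: "t2 = q1 * inverse qa * t0" and u: "u = q1 * inverse qa * t0 ^ 2"
    and A: "A = T (q1 * inverse qa) * T u / (T (inverse qa) * T (u * q1))"
    and B: "B = T q1 * T (qa * u) / (T qa * T (u * q1))"
  shows "fz t0 t1 - A * fz t1 t1 - B * fz t2 t1 = 0" and "fz t0 t2 - A * fz t1 t2 - B * fz t2 t2 = 0"
proof -
  have e1: "t0 * t1 = qa * u" and e2: "t0 / t1 = inverse q1" and e3: "t2 * t1 = u * q1"
    and e4: "t2 / t1 = inverse qa" and e5: "t0 * t2 = u" and e6: "t0 / t2 = inverse (q1 * inverse qa)"
    and e7: "t1 * t2 = u * q1" and e8: "t1 / t2 = qa"
    unfolding t1 t2 u using qa q1 t0 by (simp_all add: field_simps power2_eq_square)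
  have i1: "T (inverse (q1 * inverse qa)) = - T (q1 * inverse qa) / (q1 * inverse qa)"
    by (rule Tinv) (use qa q1 in simp)
  have i2: "T (inverse qa) = - T qa / qa" using Tinv qa by simp
  have i3: "T (inverse q1) = - T q1 / q1" using Tinv q1 by simp
  show "fz t0 t1 - A * fz t1 t1 - B * fz t2 t1 = 0"
    unfolding fz_self unfolding fz_def e1 e2 e3 e4 i3 i2 B
    using qa q1 t0 Ta Tu by (simp add: t2 field_simps)
  show "fz t0 t2 - A * fz t1 t2 - B * fz t2 t2 = 0"
    unfolding fz_self unfolding fz_def e5 e6 e7 e8 i1 A i2
    using qa q1 t0 Ta Tu by (simp add: t1 field_simps)
qed

end

lemma Qs: "qpow \<eta> s * qpow \<eta> r = qpow \<eta> (s + r)"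
  by (simp add: qpow_def mult_exp_exp algebra_simps)

lemma Qs2: "qpow \<eta> s * (qpow \<eta> r * x) = qpow \<eta> (s + r) * x"
  by (simp add: Qs mult.assoc[symmetric])

lemma Qnz: "qpow \<eta> s \<noteq> 0" by (simp add: qpow_def)

lemma Qneg: "inverse (qpow \<eta> s) = qpow \<eta> (- s)"
  using Qs[of \<eta> s "-s"] Qnz[of \<eta> s] by (simp add: qpow_def field_simps)

lemma Q0: "qpow \<eta> 0 = 1" by (simp add: qpow_def)

lemma Qcong: "s = r \<Longrightarrow> qpow \<eta> s * x = qpow \<eta> r * x" by simp

lemma one_neq_m1: "(1::complex) \<noteq> -1" by simp

lemma R11: "R_SOS \<eta> p 1 1 1 1 lam u = 1" by (simp add: R_SOS_def Let_def)
lemma Rmm: "R_SOS \<eta> p (-1) (-1) (-1) (-1) lam u = 1" by (simp add: R_SOS_def Let_def)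
lemma R_a: "R_SOS \<eta> p 1 (-1) (-1) 1 lam u =
   theta (qpow \<eta> 1) p * theta (qpow \<eta> (-lam) * u) p / (theta (qpow \<eta> (-lam)) p * theta (u * qpow \<eta> 1) p)"
  by (simp add: R_SOS_def Let_def)
lemma R_b: "R_SOS \<eta> p (-1) 1 (-1) 1 lam u =
   theta (qpow \<eta> (lam + 1)) p * theta u p / (theta (qpow \<eta> lam) p * theta (u * qpow \<eta> 1) p)"
  by (simp add: R_SOS_def Let_def)
lemma R_c: "R_SOS \<eta> p 1 (-1) 1 (-1) lam u =
   theta (qpow \<eta> (1 - lam)) p * theta u p / (theta (qpow \<eta> (-lam)) p * theta (u * qpow \<eta> 1) p)"
  by (simp add: R_SOS_def Let_def)
lemma R_d: "R_SOS \<eta> p (-1) 1 1 (-1) lam u =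
   theta (qpow \<eta> 1) p * theta (qpow \<eta> lam * u) p / (theta (qpow \<eta> lam) p * theta (u * qpow \<eta> 1) p)"
  by (simp add: R_SOS_def Let_def)

lemma phi_fz: "thp p \<Longrightarrow> phi \<eta> p s a c x = thp.fz p (qpow \<eta> (a * (c - a) / 2) * s) x"
  by (simp add: phi_def thp.fz_def Let_def)

lemma Sd: fixes a :: complex
  shows "{c. c - a \<in> {1, -1} \<and> a - c \<in> {1, -1}} = {a + 1, a - 1}"
proof (rule set_eqI)
  fix c :: complex
  have h1: "c - a = 1 \<longleftrightarrow> c = a + 1" by (auto simp: algebra_simps)
  have h2: "c - a = -1 \<longleftrightarrow> c = a - 1" by (auto simp: algebra_simps)
  have h3: "a - c = 1 \<longleftrightarrow> c = a - 1" by (auto simp: algebra_simps)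
  have h4: "a - c = -1 \<longleftrightarrow> c = a + 1" by (auto simp: algebra_simps)
  show "c \<in> {c. c - a \<in> {1, -1} \<and> a - c \<in> {1, -1}} \<longleftrightarrow> c \<in> {a + 1, a - 1}"
    unfolding mem_Collect_eq insert_iff empty_iff h1 h2 h3 h4 by blast
qed

theorem proposition3p2:
  fixes p \<eta> u su a b d x :: complex
  assumes "0 < norm p" and "norm p < 1"
    and "u \<noteq> 0" and "su ^ 2 = u"
    and "b - a \<in> {1, -1}" and "d - b \<in> {1, -1}"
    and "theta (qpow \<eta> a) p \<noteq> 0" and "theta (qpow \<eta> (-a)) p \<noteq> 0"
    and "theta (u * qpow \<eta> 1) p \<noteq> 0"
    and "x \<noteq> 0"
  shows "phi \<eta> p su b d x =
    (\<Sum>c\<in>{c. c - a \<in> {1, -1} \<and> d - c \<in> {1, -1}}.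
        W_SOS \<eta> p a b c d u * phi \<eta> p (qpow \<eta> (1/2) * su) a c x)"
proof -
  have th: "thp p" using assms(1,2) by (simp add: thp_def)
  interpret thp p by (rule th)
  note phiz = phi_fz[OF th]
  have su0: "su \<noteq> 0" using assms(3,4) by auto
  define qa where "qa = qpow \<eta> a"
  define q1 where "q1 = qpow \<eta> 1"
  have qa0: "qa \<noteq> 0" and q10: "q1 \<noteq> 0" by (simp_all add: qa_def q1_def Qnz)
  have Ta: "T qa \<noteq> 0" using assms(7) by (simp add: qa_def)
  have Tu: "T (u * q1) \<noteq> 0" using assms(9) by (simp add: q1_def)
  have bcases: "b = a + 1 \<or> b = a - 1" using assms(5) by (auto simp: algebra_simps)
  have dcases: "d = b + 1 \<or> d = b - 1" using assms(6) by (auto simp: algebra_simps)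
  have ne: "a + 1 \<noteq> a - 1" by simp
  show ?thesis
  proof (cases "b = a + 1")
    case b: True
    show ?thesis
    proof (cases "d = b + 1")
      case d: True
      have S: "{c. c - a \<in> {1, -1} \<and> d - c \<in> {1, -1}} = {a + 1}"
        using b d by (auto simp: algebra_simps)
      have W: "W_SOS \<eta> p a b (a + 1) d u = 1" using b d by (simp add: W_SOS_def R11)
      have "qpow \<eta> (b * (d - b) / 2) * su = qpow \<eta> (a * (a + 1 - a) / 2) * (qpow \<eta> (1 / 2) * su)"
        unfolding Qs2 by (rule Qcong) (simp add: b d field_simps)
      then have e2: "phi \<eta> p su b d x = phi \<eta> p (qpow \<eta> (1/2) * su) a (a + 1) x"
        by (simp only: phiz)
      have "(\<Sum>c\<in>{a + 1}. W_SOS \<eta> p a b c d u * phi \<eta> p (qpow \<eta> (1/2) * su) a c x)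
         = W_SOS \<eta> p a b (a + 1) d u * phi \<eta> p (qpow \<eta> (1/2) * su) a (a + 1) x" by simp
      then show ?thesis unfolding S e2 W by (simp only: mult_1)
    next
      case d: False
      have "d = b - 1" using dcases d by blast
      then have d: "d = a" using b by simp
      have S: "{c. c - a \<in> {1, -1} \<and> d - c \<in> {1, -1}} = {a + 1, a - 1}"
        unfolding d by (rule Sd)
      define t0 where "t0 = qpow \<eta> (- (a + 1) / 2) * su"
      define t1 where "t1 = qa * q1 * t0"
      define t2 where "t2 = q1 * t0"
      define A where "A = T q1 * T (inverse qa * u) / (T (inverse qa) * T (u * q1))"
      define B where "B = T (qa * q1) * T u / (T qa * T (u * q1))"
      have t00: "t0 \<noteq> 0" using su0 by (simp add: t0_def Qnz)
      have t10: "t1 \<noteq> 0" using t00 qa0 q10 by (simp add: t1_def)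
      have t20: "t2 \<noteq> 0" using t00 q10 by (simp add: t2_def)
      have p0: "phi \<eta> p su b d x = fz t0 x"
      proof -
        have "qpow \<eta> (b * (d - b) / 2) * su = t0"
          unfolding t0_def by (rule Qcong) (simp add: b d field_simps)
        then show ?thesis by (simp only: phiz)
      qed
      have p1: "phi \<eta> p (qpow \<eta> (1/2) * su) a (a + 1) x = fz t1 x"
      proof -
        have "qpow \<eta> (a * (a + 1 - a) / 2) * (qpow \<eta> (1/2) * su) = t1"
          unfolding t1_def t0_def qa_def q1_def Qs Qs2 by (rule Qcong) (simp add: field_simps)
        then show ?thesis by (simp only: phiz)
      qed
      have p2: "phi \<eta> p (qpow \<eta> (1/2) * su) a (a - 1) x = fz t2 x"
      proof -
        have "qpow \<eta> (a * (a - 1 - a) / 2) * (qpow \<eta> (1/2) * su) = t2"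
          unfolding t2_def t0_def q1_def Qs Qs2 by (rule Qcong) (simp add: field_simps)
        then show ?thesis by (simp only: phiz)
      qed
      have ueq: "u = qa * q1 * t0 ^ 2"
      proof -
        have "qa * q1 * t0 ^ 2 = qpow \<eta> (a + 1 + (- (a + 1) / 2 + - (a + 1) / 2)) * su ^ 2"
          unfolding qa_def q1_def t0_def power2_eq_square
          by (simp only: Qs[symmetric] mult.assoc mult.left_commute)
        also have "\<dots> = su ^ 2" by (simp add: Q0)
        finally show ?thesis using assms(4) by simp
      qed
      have WA: "W_SOS \<eta> p a b (a + 1) d u = A"
      proof -
        have "W_SOS \<eta> p a b (a + 1) d u = R_SOS \<eta> p 1 (-1) (-1) 1 a u"
          unfolding W_SOS_def b d by simp
        also have "\<dots> = A" unfolding R_a A_def qa_def q1_def Qneg by simp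
        finally show ?thesis .
      qed
      have WB: "W_SOS \<eta> p a b (a - 1) d u = B"
      proof -
        have "W_SOS \<eta> p a b (a - 1) d u = R_SOS \<eta> p (-1) 1 (-1) 1 a u"
          unfolding W_SOS_def b d by simp
        also have "\<dots> = B" unfolding R_b B_def qa_def q1_def Qs by simp
        finally show ?thesis .
      qed
      note cs = case1[OF qa0 q10 t00 Ta Tu t1_def t2_def ueq A_def B_def]
      have n1: "T (t1 * t2) \<noteq> 0"
      proof -
        have "t1 * t2 = u * q1" unfolding t1_def t2_def ueq by (simp add: power2_eq_square)
        then show ?thesis using Tu by simp
      qed
      have n2: "T (t1 / t2) \<noteq> 0"
      proof -
        have "t1 / t2 = qa" unfolding t1_def t2_def using t00 q10 by simp
        then show ?thesis using Ta by simp
      qed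
      have main: "fz t0 x = A * fz t1 x + B * fz t2 x"
        by (rule key[OF t00 t10 t20 n1 n2 cs(1) cs(2) assms(10)])
      have sum2: "(\<Sum>c\<in>{a + 1, a - 1}. W_SOS \<eta> p a b c d u * phi \<eta> p (qpow \<eta> (1/2) * su) a c x)
         = W_SOS \<eta> p a b (a + 1) d u * phi \<eta> p (qpow \<eta> (1/2) * su) a (a + 1) x
           + W_SOS \<eta> p a b (a - 1) d u * phi \<eta> p (qpow \<eta> (1/2) * su) a (a - 1) x"
        using ne by simp
      show ?thesis unfolding S sum2 WA WB p0 p1 p2 by (rule main)
    qed
  next
    case b: False
    then have b: "b = a - 1" using bcases by simp
    show ?thesis
    proof (cases "d = b - 1")
      case d: True
      have S: "{c. c - a \<in> {1, -1} \<and> d - c \<in> {1, -1}} = {a - 1}"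
        using b d by (auto simp: algebra_simps)
      have W: "W_SOS \<eta> p a b (a - 1) d u = 1" using b d by (simp add: W_SOS_def Rmm)
      have "qpow \<eta> (b * (d - b) / 2) * su = qpow \<eta> (a * (a - 1 - a) / 2) * (qpow \<eta> (1 / 2) * su)"
        unfolding Qs2 by (rule Qcong) (simp add: b d field_simps)
      then have e2: "phi \<eta> p su b d x = phi \<eta> p (qpow \<eta> (1/2) * su) a (a - 1) x"
        by (simp only: phiz)
      have "(\<Sum>c\<in>{a - 1}. W_SOS \<eta> p a b c d u * phi \<eta> p (qpow \<eta> (1/2) * su) a c x)
         = W_SOS \<eta> p a b (a - 1) d u * phi \<eta> p (qpow \<eta> (1/2) * su) a (a - 1) x" by simp
      then show ?thesis unfolding S e2 W by (simp only: mult_1)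
    next
      case d: False
      have "d = b + 1" using dcases d by blast
      then have d: "d = a" using b by simp
      have S: "{c. c - a \<in> {1, -1} \<and> d - c \<in> {1, -1}} = {a + 1, a - 1}"
        unfolding d by (rule Sd)
      define t0 where "t0 = qpow \<eta> ((a - 1) / 2) * su"
      define t1 where "t1 = q1 * t0"
      define t2 where "t2 = q1 * inverse qa * t0"
      define A where "A = T (q1 * inverse qa) * T u / (T (inverse qa) * T (u * q1))"
      define B where "B = T q1 * T (qa * u) / (T qa * T (u * q1))"
      have t00: "t0 \<noteq> 0" using su0 by (simp add: t0_def Qnz)
      have t10: "t1 \<noteq> 0" using t00 q10 by (simp add: t1_def)
      have t20: "t2 \<noteq> 0" using t00 qa0 q10 by (simp add: t2_def)
      have p0: "phi \<eta> p su b d x = fz t0 x"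
      proof -
        have "qpow \<eta> (b * (d - b) / 2) * su = t0"
          unfolding t0_def by (rule Qcong) (simp add: b d field_simps)
        then show ?thesis by (simp only: phiz)
      qed
      have p1: "phi \<eta> p (qpow \<eta> (1/2) * su) a (a + 1) x = fz t1 x"
      proof -
        have "qpow \<eta> (a * (a + 1 - a) / 2) * (qpow \<eta> (1/2) * su) = t1"
          unfolding t1_def t0_def q1_def Qs Qs2 by (rule Qcong) (simp add: field_simps)
        then show ?thesis by (simp only: phiz)
      qed
      have p2: "phi \<eta> p (qpow \<eta> (1/2) * su) a (a - 1) x = fz t2 x"
      proof -
        have "qpow \<eta> (a * (a - 1 - a) / 2) * (qpow \<eta> (1/2) * su) = t2"
          unfolding t2_def t0_def q1_def qa_def Qneg Qs Qs2 by (rule Qcong) (simp add: field_simps)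
        then show ?thesis by (simp only: phiz)
      qed
      have ueq: "u = q1 * inverse qa * t0 ^ 2"
      proof -
        have "q1 * inverse qa * t0 ^ 2 = qpow \<eta> (1 + - a + ((a - 1) / 2 + (a - 1) / 2)) * su ^ 2"
          unfolding qa_def q1_def t0_def power2_eq_square Qneg
          by (simp only: Qs[symmetric] mult.assoc mult.left_commute)
        also have "\<dots> = su ^ 2" by (simp add: Q0 field_simps)
        finally show ?thesis using assms(4) by simp
      qed
      have WA: "W_SOS \<eta> p a b (a + 1) d u = A"
      proof -
        have "W_SOS \<eta> p a b (a + 1) d u = R_SOS \<eta> p 1 (-1) 1 (-1) a u"
          unfolding W_SOS_def b d by simp
        also have "\<dots> = A" unfolding R_c A_def qa_def q1_def Qneg Qs by simp
        finally show ?thesis .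
      qed
      have WB: "W_SOS \<eta> p a b (a - 1) d u = B"
      proof -
        have "W_SOS \<eta> p a b (a - 1) d u = R_SOS \<eta> p (-1) 1 1 (-1) a u"
          unfolding W_SOS_def b d by simp
        also have "\<dots> = B" unfolding R_d B_def qa_def q1_def by simp
        finally show ?thesis .
      qed
      note cs = case2[OF qa0 q10 t00 Ta Tu t1_def t2_def ueq A_def B_def]
      have n1: "T (t1 * t2) \<noteq> 0"
      proof -
        have "t1 * t2 = u * q1" unfolding t1_def t2_def ueq by (simp add: power2_eq_square)
        then show ?thesis using Tu by simp
      qed
      have n2: "T (t1 / t2) \<noteq> 0"
      proof -
        have "t1 / t2 = qa" unfolding t1_def t2_def using t00 q10 qa0 by (simp add: field_simps)
        then show ?thesis using Ta by simp
      qed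
      have main: "fz t0 x = A * fz t1 x + B * fz t2 x"
        by (rule key[OF t00 t10 t20 n1 n2 cs(1) cs(2) assms(10)])
      have sum2: "(\<Sum>c\<in>{a + 1, a - 1}. W_SOS \<eta> p a b c d u * phi \<eta> p (qpow \<eta> (1/2) * su) a c x)
         = W_SOS \<eta> p a b (a + 1) d u * phi \<eta> p (qpow \<eta> (1/2) * su) a (a + 1) x
           + W_SOS \<eta> p a b (a - 1) d u * phi \<eta> p (qpow \<eta> (1/2) * su) a (a - 1) x"
        using ne by simp
      show ?thesis unfolding S sum2 WA WB p0 p1 p2 by (rule main)
    qed
  qed
qed


end
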